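(* Fix $\epsilon>0$ and let $\theta=\theta(n)\in[0,\epsilon]$ be any function. Then $$\frac{\mu_k}{k_1!\,k_2!}\ge b^{\theta n/2}\exp(o(n)),$$ i.e. there is a function $h(n)=o(n)$ with $\mu_k/(k_1!k_2!)\ge b^{\theta(n)n/2}e^{h(n)}$ for all $n$.
   Context: Let $p\in(0,1)$ be constant, $q=1-p$, $b=1/q$, $\gamma=2\log_b n-2\log_b\log_b n-2\log_b 2$, $\Delta=\gamma-\lfloor\gamma\rfloor$, and $x_0=x_0(n)$ the smallest nonnegative $x$ with $(1-\Delta+x)\log_b(1-\Delta+x)+(1-\Delta)(\Delta-x)/2\le0$. Let $k=\lceil n/(\gamma-x_0-\theta)\rceil$, $\delta=n/k-\lfloor n/k\rfloor$, $k_1=\delta k$, $k_2=(1-\delta)k$. An ordered $k$-equipartition of the vertex set $[n]$ is a sequence of $k$ disjoint sets covering $[n]$, the first $k_1$ of size $\lceil n/k\rceil$ and the remaining $k_2$ of size $\lfloor n/k\rfloor$. Let $P=n!/(\lceil n/k\rceil!^{k_1}\lfloor n/k\rfloor!^{k_2})$ be their number, $f=k_1\binom{\lceil n/k\rceil}{2}+k_2\binom{\lfloor n/k\rfloor}{2}$, and $\mu_k=Pq^f$, which is the expected number of ordered $k$-equipartitions all of whose parts are independent sets in $G\sim\mathcal{G}(n,p)$. *)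

theory Defs
  imports Complex_Main "HOL-Library.Landau_Symbols"
begin

definition qq :: "real \<Rightarrow> real" where "qq p = 1 - p"
definition bb :: "real \<Rightarrow> real" where "bb p = 1 / qq p"

definition gam :: "real \<Rightarrow> nat \<Rightarrow> real" where
  "gam p n = 2 * log (bb p) (real n) - 2 * log (bb p) (log (bb p) (real n)) - 2 * log (bb p) 2"

definition Delta :: "real \<Rightarrow> nat \<Rightarrow> real" where
  "Delta p n = gam p n - of_int \<lfloor>gam p n\<rfloor>"

definition x0 :: "real \<Rightarrow> nat \<Rightarrow> real" where
  "x0 p n = (let D = Delta p n in
     Inf {x::real. 0 \<le> x \<and>
        (1 - D + x) * log (bb p) (1 - D + x) + (1 - D) * (D - x) / 2 \<le> 0})"

definition kk :: "real \<Rightarrow> real \<Rightarrow> nat \<Rightarrow> nat" where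
  "kk p t n = nat \<lceil>real n / (gam p n - x0 p n - t)\<rceil>"

text \<open>Part sizes ceil(n/k), floor(n/k); k1 = delta*k = n mod k, k2 = (1-delta) k = k - k1.\<close>
definition szc :: "real \<Rightarrow> real \<Rightarrow> nat \<Rightarrow> nat" where
  "szc p t n = nat \<lceil>real n / real (kk p t n)\<rceil>"
definition szf :: "real \<Rightarrow> real \<Rightarrow> nat \<Rightarrow> nat" where
  "szf p t n = nat \<lfloor>real n / real (kk p t n)\<rfloor>"
definition k1 :: "real \<Rightarrow> real \<Rightarrow> nat \<Rightarrow> nat" where
  "k1 p t n = n mod kk p t n"
definition k2 :: "real \<Rightarrow> real \<Rightarrow> nat \<Rightarrow> nat" where
  "k2 p t n = kk p t n - k1 p t n"

text \<open>Number of ordered k-equipartitions, f, and mu_k = P q^f.\<close>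
definition Pn :: "real \<Rightarrow> real \<Rightarrow> nat \<Rightarrow> real" where
  "Pn p t n = fact n / (fact (szc p t n) ^ k1 p t n * fact (szf p t n) ^ k2 p t n)"
definition ff :: "real \<Rightarrow> real \<Rightarrow> nat \<Rightarrow> nat" where
  "ff p t n = k1 p t n * (szc p t n choose 2) + k2 p t n * (szf p t n choose 2)"
definition mu :: "real \<Rightarrow> real \<Rightarrow> nat \<Rightarrow> real" where
  "mu p t n = Pn p t n * qq p ^ ff p t n"

end

theory Submission
  imports Defs "HOL-Real_Asymp.Real_Asymp"
begin


lemma ln_fact_lower: "real m * ln (real m) - real m \<le> ln (fact m)"
proof (induction m)
  case 0 then show ?case by simp
next
  case (Suc m)
  have key: "real m * ln (real m + 1) \<le> real m * ln (real m) + 1"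
  proof (cases "m = 0")
    case True then show ?thesis by simp
  next
    case False
    hence mp: "real m > 0" by simp
    have "ln ((real m + 1) / real m) \<le> (real m + 1) / real m - 1"
      using mp by (intro ln_le_minus_one) simp
    also have "\<dots> = 1 / real m" using mp by (simp add: field_simps)
    finally have "ln (real m + 1) - ln (real m) \<le> 1 / real m"
      using mp by (simp add: ln_div)
    hence "real m * (ln (real m + 1) - ln (real m)) \<le> real m * (1 / real m)"
      using mp by (intro mult_left_mono) auto
    thus ?thesis using mp by (simp add: algebra_simps)
  qed
  have "ln (fact (Suc m)) = ln (real m + 1) + ln (fact m)"
    by (simp add: ln_mult add.commute)
  with Suc key show ?case by (simp add: algebra_simps)
qed

lemma ln_fact_upper: "ln (fact m) \<le> (real m + 1) * ln (real m + 1) - real m"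
proof (induction m)
  case 0 then show ?case by simp
next
  case (Suc m)
  have y: "real m + 1 > 0" by simp
  have "ln ((real m + 1) / (real m + 2)) \<le> (real m + 1) / (real m + 2) - 1"
    by (intro ln_le_minus_one) simp
  also have "\<dots> = - 1 / (real m + 2)" by (simp add: field_simps)
  finally have "ln (real m + 2) - ln (real m + 1) \<ge> 1 / (real m + 2)"
    by (simp add: ln_div)
  hence "(real m + 2) * (ln (real m + 2) - ln (real m + 1)) \<ge> (real m + 2) * (1 / (real m + 2))"
    by (intro mult_left_mono) auto
  hence key: "(real m + 2) * (ln (real m + 2) - ln (real m + 1)) \<ge> 1" by simp
  have "ln (fact (Suc m)) = ln (real m + 1) + ln (fact m)"
    by (simp add: ln_mult add.commute)
  with Suc key show ?case by (simp add: algebra_simps)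
qed

lemma real_choose_two: "real (m choose 2) = real m * (real m - 1) / 2"
proof (induction m)
  case 0 then show ?case by simp
next
  case (Suc m)
  have "Suc m choose 2 = m + (m choose 2)"
    by (simp add: numeral_2_eq_2)
  with Suc show ?case by (simp add: field_simps)
qed

lemma asym:
  fixes L e :: real assumes "L > 0" "e > 0"
  shows "(\<lambda>n. (real n / (2*ln (real n)/L - 2*ln(ln (real n)/L)/L - 2*ln 2/L - 1 - e) + 1) * (ln (2*(ln (real n)/L)) + L + ln (real n)) - L * real n / 2) \<in> o(\<lambda>n. real n)"
  using assms by real_asymp

lemma ev1:
  fixes L e :: real assumes "L > 0" "e > 0"
  shows "eventually (\<lambda>n::nat. 2*ln (real n)/L - 2*ln(ln (real n)/L)/L - 2*ln 2/L - 1 - e \<ge> 1) at_top"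
  using assms by real_asymp

lemma ev2:
  fixes L :: real assumes "L > 0"
  shows "eventually (\<lambda>n::nat. 2 \<le> 2*ln(ln (real n)/L)/L + 2*ln 2/L) at_top"
  using assms by real_asymp



lemma x0_bounds:
  assumes "bb p > 0"
  shows "0 \<le> x0 p n \<and> x0 p n \<le> Delta p n \<and> Delta p n < 1 \<and> 0 \<le> Delta p n"
proof -
  define D where "D = Delta p n"
  define S where "S = {x::real. 0 \<le> x \<and>
        (1 - D + x) * log (bb p) (1 - D + x) + (1 - D) * (D - x) / 2 \<le> 0}"
  have D0: "0 \<le> D" "D < 1" unfolding D_def Delta_def by linarith+
  have DS: "D \<in> S" unfolding S_def using D0 by simp
  have bdd: "bdd_below S" unfolding S_def by (auto intro: bdd_belowI)
  have X: "x0 p n = Inf S" unfolding x0_def S_def D_def Let_def by simp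
  have "Inf S \<le> D" by (rule cInf_lower[OF DS bdd])
  moreover have "0 \<le> Inf S" using DS by (intro cInf_greatest) (auto simp: S_def)
  ultimately show ?thesis using D0 X D_def by simp
qed



lemma gam_eq:
  assumes "0 < p" "p < 1"
  shows "gam p n = 2*ln (real n)/ln (bb p) - 2*ln(ln (real n)/ln (bb p))/ln (bb p) - 2*ln 2/ln (bb p)"
  unfolding gam_def log_def by simp

lemma final_arith:
  fixes lhs N lnN K M L A G T :: real
  assumes "lhs \<ge> N*lnN - N - ((N+K)*M - N) - L*(N*(A-1)+K)/2 - K*lnN"
    "L*(N*A) \<le> L*(N*(G-T))" "L*G/2 = lnN - M"
  shows "lhs \<ge> L*N*T/2 + L*N/2 - K*(M + L/2 + lnN)"
proof -
  have e1: "L*(N*G) = 2*(N*lnN) - 2*(N*M)"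
  proof -
    have "L*(N*G) = 2*N*(L*G/2)" by simp
    also have "\<dots> = 2*N*(lnN - M)" using assms(3) by simp
    finally show ?thesis by (simp add: algebra_simps)
  qed
  have e2: "L*(N*(A-1)+K)/2 = (L*(N*A) - L*N + L*K)/2" by (simp add: algebra_simps)
  have e3: "L*(N*(G-T)) = L*(N*G) - L*N*T" by (simp add: algebra_simps)
  have e4: "(N+K)*M = N*M + K*M" by (simp add: algebra_simps)
  have e5: "K*(M + L/2 + lnN) = K*M + L*K/2 + K*lnN" by (simp add: algebra_simps)
  show ?thesis using assms(1,2) e1 e2 e3 e4 e5 by argo
qed

lemma fin_arith:
  fixes l A B X Y Z :: real
  assumes "l \<ge> A + B - X" "X \<le> Y" "Y \<le> Z" shows "l \<ge> A - (Z - B)"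
  using assms by linarith

lemma key:
  fixes p e t :: real and n :: nat
  assumes p: "0 < p" "p < 1" and t: "0 \<le> t" "t \<le> e" and n1: "n \<ge> 1"
    and H1: "gam p n - 1 - e \<ge> 1"
    and H2: "gam p n + 2 \<le> 2 * ln (real n) / ln (bb p)"
  shows "ln (mu p t n / (fact (k1 p t n) * fact (k2 p t n))) \<ge>
     ln (bb p) * real n * t / 2 - ((real n / (gam p n - 1 - e) + 1) *
        (ln (2*(ln (real n)/ln (bb p))) + ln (bb p) + ln (real n)) - ln (bb p) * real n / 2)"
proof -
  define b where "b = bb p"
  define L where "L = ln b"
  define \<gamma> where "\<gamma> = gam p n"
  define X where "X = x0 p n"
  define a where "a = \<gamma> - X - t"
  define k where "k = kk p t n"
  define c where "c = szc p t n"
  define fl where "fl = szf p t n"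
  define r where "r = k1 p t n"
  define s where "s = k2 p t n"
  define M where "M = ln (2*(ln (real n)/L))"
  define G where "G = \<gamma> - 1 - e"
  have b1: "b > 1" unfolding b_def bb_def qq_def using p by (simp add: field_simps)
  have Lpos: "L > 0" unfolding L_def using b1 by simp
  have qL: "ln (qq p) = - L" unfolding L_def b_def bb_def using p by (simp add: ln_div qq_def)
  have qpos: "qq p > 0" unfolding qq_def using p by simp
  have xb: "0 \<le> X" "X \<le> 1" using x0_bounds[of p n] b1 unfolding X_def b_def by auto
  have G1: "G \<ge> 1" using H1 unfolding G_def \<gamma>_def .
  have aG: "a \<ge> G" unfolding a_def G_def using xb t by linarith
  have aga: "a \<le> \<gamma> - t" unfolding a_def using xb by linarith
  have npos: "real n > 0" using n1 by simp
  have lnL: "ln (real n) / L > 0" using H2 H1 Lpos t unfolding L_def b_def \<gamma>_def by linarith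
  have Mdef2: "M = ln 2 + ln (ln (real n) / L)" unfolding M_def using lnL Lpos ln_mult[of 2 "ln (real n) / L"] by (simp del: times_divide_eq_right) (metis divide_eq_0_iff less_irrefl)
  have gamL: "L * \<gamma> / 2 = ln (real n) - M"
    unfolding \<gamma>_def gam_def log_def Mdef2 using Lpos by (simp add: L_def b_def field_simps)
  have HM: "\<gamma> + 2 \<le> exp M"
  proof -
    have "exp M = 2 * (ln (real n) / L)" unfolding M_def using lnL by simp
    thus ?thesis using H2 unfolding \<gamma>_def L_def b_def by simp
  qed
  have apos: "a > 0" using aG G1 by linarith
  have kdef: "k = nat \<lceil>real n / a\<rceil>" unfolding k_def kk_def a_def \<gamma>_def X_def by simp
  have kge: "real k \<ge> real n / a" unfolding kdef by linarith
  have kle: "real k \<le> real n / a + 1" unfolding kdef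
    using apos npos by (simp add: of_nat_nat)
  have k1: "k \<ge> 1" using kge apos npos
    by (metis divide_pos_pos le_less_trans linorder_not_le of_nat_0_less_iff order_less_irrefl less_one) 
  have kpos: "real k > 0" using k1 by simp
  have nka: "real n / real k \<le> a" using kge apos kpos by (simp add: field_simps)
  have kn: "real k \<le> real n"
  proof -
    have "real n / a \<le> real n" using apos aG G1 npos by (simp add: field_simps)
    hence "\<lceil>real n / a\<rceil> \<le> int n" by (simp add: ceiling_le_iff)
    thus ?thesis unfolding kdef by (metis nat_le_iff of_nat_le_iff)
  qed
  have kG: "real k \<le> real n / G + 1"
    using kle apos aG G1 npos by (smt (verit) frac_le)
  define q where "q = n div k"
  have rdef: "r = n mod k" unfolding r_def k1_def k_def by simp
  have sdef: "s = k - r" unfolding s_def k2_def r_def k_def by simp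
  have rk: "r < k" using k1 rdef by simp
  have nqr: "n = k * q + r" unfolding q_def rdef by simp
  have fleq: "fl = q" unfolding fl_def szf_def k_def[symmetric] q_def
    by (simp add: floor_divide_of_nat_eq)
  have ceq: "r > 0 \<Longrightarrow> c = q + 1"
  proof -
    assume r0: "r > 0"
    have "real n / real k = real q + real r / real k" using nqr kpos
      by (simp add: field_simps)
    moreover have "real r / real k < 1" "real r / real k > 0" using rk r0 kpos by auto
    ultimately have "\<lceil>real n / real k\<rceil> = int q + 1" by (intro ceiling_unique) auto
    thus "c = q + 1" unfolding c_def szc_def k_def[symmetric] by simp
  qed
  have sumeq: "r * c + s * fl = n"
  proof (cases "r = 0")
    case True then show ?thesis using nqr sdef fleq by simp
  next
    case False then show ?thesis using nqr sdef fleq ceq rk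
      by (simp add: algebra_simps)
  qed
  have rs: "r + s = k" using sdef rk by simp
  have qle: "real q \<le> real n / real k" using nqr kpos by (simp add: field_simps)
  have Mb: "ln (real q + 2) \<le> M"
  proof -
    have "real q + 2 \<le> exp M" using qle nka aga t HM by linarith
    thus ?thesis by (smt (verit) ln_exp ln_le_cancel_iff of_nat_0_le_iff) 
  qed
  have Pden: "ln (fact c ^ r * fact fl ^ s) \<le> (real n + real k) * M - real n"
  proof -
    have A1: "real r * ln (fact c) \<le> real r * ((real c + 1) * M - real c)"
    proof (cases "r = 0")
      case True then show ?thesis by simp
    next
      case False
      hence "c = q + 1" using ceq by simp
      hence "ln (real c + 1) \<le> M" using Mb by (simp add: add.commute add.left_commute) 
      hence "ln (fact c) \<le> (real c + 1) * M - real c"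
        using ln_fact_upper[of c] by (smt (verit) mult_left_mono of_nat_0_le_iff)
      thus ?thesis by (intro mult_left_mono) auto
    qed
    have "ln (real fl + 1) \<le> M" using Mb fleq
      by (smt (verit) ln_le_cancel_iff of_nat_0_le_iff)
    hence "ln (fact fl) \<le> (real fl + 1) * M - real fl"
      using ln_fact_upper[of fl] by (smt (verit) mult_left_mono of_nat_0_le_iff)
    hence A2: "real s * ln (fact fl) \<le> real s * ((real fl + 1) * M - real fl)"
      by (intro mult_left_mono) auto
    have "ln (fact c ^ r * fact fl ^ s) = real r * ln (fact c) + real s * ln (fact fl)"
      by (simp add: ln_mult ln_realpow)
    also have "\<dots> \<le> real r * ((real c + 1) * M - real c) + real s * ((real fl + 1) * M - real fl)"
      using A1 A2 by linarith
    also have "\<dots> = (real (r*c + s*fl) + real (r + s)) * M - real (r*c+s*fl)"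
      by (simp add: algebra_simps)
    also have "\<dots> = (real n + real k) * M - real n" using sumeq rs by simp
    finally show ?thesis .
  qed
  have ffb: "2 * real (ff p t n) \<le> real n * (real n / real k - 1) + real k"
  proof -
    have ffe: "ff p t n = r * (c choose 2) + s * (fl choose 2)"
      unfolding ff_def r_def s_def c_def fl_def ..
    show ?thesis
    proof (cases "r = 0")
      case True
      hence "real n = real k * real q" using nqr by simp
      moreover have "2 * real (ff p t n) = real k * real q * (real q - 1)"
        using True ffe fleq sdef by (simp add: real_choose_two)
      ultimately show ?thesis using kpos by (simp add: field_simps)
    next
      case False
      hence cq: "c = q + 1" using ceq by simp
      have e1: "real n = real k * real q + real r" using nqr by simp
      have e2: "2 * real (ff p t n) = real r * (real q + 1) * real q + (real k - real r) * real q * (real q - 1)"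
      proof -
        have "real (ff p t n) = real r * real (c choose 2) + real s * real (fl choose 2)"
          using ffe by simp
        moreover have "real s = real k - real r" using sdef rk by (simp add: of_nat_diff)
        ultimately show ?thesis using fleq cq by (simp add: real_choose_two field_simps)
      qed
      have "real r * real r \<ge> 0" by simp
      have "real n * (real n / real k - 1) + real k - 2 * real (ff p t n)
            = real k - real r + real r * real r / real k"
        unfolding e1 e2 using kpos by (simp add: field_simps)
      moreover have "real r * real r / real k \<ge> 0" using kpos by simp
      ultimately show ?thesis using rk by (smt (verit) of_nat_less_iff)
    qed
  qed
  have kf: "ln (fact r * fact s) \<le> real k * ln (real n)"
  proof -
    have "fact r * fact s * real (k choose r) = (fact k :: real)"
      using binomial_fact_lemma[of r k] rk sdef by (metis less_imp_le_nat of_nat_fact of_nat_mult)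
    moreover have "real (k choose r) \<ge> 1" using rk zero_less_binomial[of r k] by (simp add: Suc_le_eq del: zero_less_binomial_iff)
    ultimately have "fact r * fact s \<le> (fact k :: real)"
    proof -
      assume eq: "fact r * fact s * real (k choose r) = (fact k :: real)" and ge: "real (k choose r) \<ge> 1"
      have "fact r * fact s * 1 \<le> (fact r * fact s :: real) * real (k choose r)"
        using ge by (intro mult_left_mono) auto
      thus ?thesis using eq by simp
    qed
    also have "\<dots> \<le> real (k ^ k)" by (rule fact_le_power)
    also have "\<dots> \<le> real n ^ k" using kn by (simp add: power_mono)
    finally have "fact r * fact s \<le> real n ^ k" .
    hence "ln (fact r * fact s) \<le> ln (real n ^ k)" by (intro ln_mono) (auto intro: mult_pos_pos)
    thus ?thesis by (simp add: ln_realpow)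
  qed
  have lhs: "ln (mu p t n / (fact r * fact s)) =
        ln (fact n) - ln (fact c ^ r * fact fl ^ s) - L * real (ff p t n) - ln (fact r * fact s)"
    unfolding mu_def Pn_def r_def[symmetric] s_def[symmetric] c_def[symmetric] fl_def[symmetric]
    using qpos qL by (simp add: ln_div ln_mult ln_realpow)
  have fn: "ln (fact n) \<ge> real n * ln (real n) - real n" by (rule ln_fact_lower)
  have ffL: "L * real (ff p t n) \<le> L * (real n * (a - 1) + real k) / 2"
  proof -
    have "real n * (real n / real k - 1) \<le> real n * (a - 1)"
      using nka npos by (intro mult_left_mono) auto
    hence "2 * real (ff p t n) \<le> real n * (a - 1) + real k"
      using ffb by (meson add_right_mono order_trans)
    hence "real (ff p t n) \<le> (real n * (a - 1) + real k) / 2" by simp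
    thus ?thesis using Lpos by (simp add: mult_left_mono)
  qed
  have na: "L * (real n * a) \<le> L * (real n * (\<gamma> - t))"
    using aga npos Lpos by (intro mult_left_mono) auto
  have Mpos: "M + L + ln (real n) \<ge> 0"
  proof -
    have "exp M \<ge> 2" using HM H1 unfolding \<gamma>_def G_def using t by linarith
    hence "M \<ge> 0" by (smt (verit) exp_le_cancel_iff exp_zero)
    thus ?thesis using Lpos n1 by simp
  qed
  have kterm: "real k * (M + L + ln (real n)) \<le> (real n / G + 1) * (M + L + ln (real n))"
    using kG Mpos by (intro mult_right_mono) auto
  have "ln (mu p t n / (fact r * fact s)) \<ge>
       (real n * ln (real n) - real n) - ((real n + real k) * M - real n)
        - L * (real n * (a - 1) + real k) / 2 - real k * ln (real n)"
    using lhs fn Pden ffL kf by linarith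
  hence "ln (mu p t n / (fact r * fact s)) \<ge>
       L * real n * t / 2 + L * real n / 2 - real k * (M + L/2 + ln (real n))"
    using na gamL by (rule final_arith)
  moreover have "real k * (M + L/2 + ln (real n)) \<le> real k * (M + L + ln (real n))"
    using Lpos kpos by simp
  ultimately have fin: "ln (mu p t n / (fact r * fact s)) \<ge>
     L * real n * t / 2 - ((real n / G + 1) * (M + L + ln (real n)) - L * real n / 2)"
    using kterm by (rule fin_arith)
  have eqs: "ln (bb p) = L" "k1 p t n = r" "k2 p t n = s" "gam p n - 1 - e = G"
    "ln (2*(ln (real n)/L)) = M" by (simp_all add: L_def b_def r_def s_def G_def \<gamma>_def M_def)
  show ?thesis unfolding eqs(1,2,3,4) eqs(5) by (rule fin)
qed



theorem mainTheorem9: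
  fixes p \<epsilon> :: real and \<theta> :: "nat \<Rightarrow> real"
  assumes "0 < p" and "p < 1" and "0 < \<epsilon>"
    and "\<forall>n. 0 \<le> \<theta> n \<and> \<theta> n \<le> \<epsilon>"
  shows "\<exists>h :: nat \<Rightarrow> real. h \<in> o(\<lambda>n. real n) \<and>
    (\<forall>n. mu p (\<theta> n) n / (fact (k1 p (\<theta> n) n) * fact (k2 p (\<theta> n) n))
          \<ge> bb p powr (\<theta> n * real n / 2) * exp (h n))"
proof -
  define L where "L = ln (bb p)"
  have b1: "bb p > 1" unfolding bb_def qq_def using assms(1,2) by (simp add: field_simps)
  have Lpos: "L > 0" unfolding L_def using b1 by simp
  define g where "g = (\<lambda>n. (real n / (gam p n - 1 - \<epsilon>) + 1) *
        (ln (2*(ln (real n)/L)) + L + ln (real n)) - L * real n / 2)"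
  have gam': "\<And>n. gam p n = 2*ln (real n)/L - 2*ln(ln (real n)/L)/L - 2*ln 2/L"
    unfolding L_def using gam_eq[OF assms(1,2)] .
  have go: "g \<in> o(\<lambda>n. real n)"
    unfolding g_def gam' using asym[OF Lpos assms(3)] .
  have ev: "eventually (\<lambda>n::nat. n \<ge> 1 \<and> gam p n - 1 - \<epsilon> \<ge> 1 \<and>
      gam p n + 2 \<le> 2 * ln (real n) / L) at_top"
  proof -
    have "eventually (\<lambda>n::nat. n \<ge> 1) at_top" by (rule eventually_ge_at_top)
    moreover have "eventually (\<lambda>n::nat. gam p n - 1 - \<epsilon> \<ge> 1) at_top"
      unfolding gam' using ev1[OF Lpos assms(3)] .
    moreover have "eventually (\<lambda>n::nat. gam p n + 2 \<le> 2 * ln (real n) / L) at_top"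
      using ev2[OF Lpos] by eventually_elim (simp add: gam')
    ultimately show ?thesis by eventually_elim auto
  qed
  define Q where "Q = (\<lambda>n. mu p (\<theta> n) n / (fact (k1 p (\<theta> n) n) * fact (k2 p (\<theta> n) n)))"
  have Qpos: "\<And>n. Q n > 0"
    unfolding Q_def mu_def Pn_def using assms(1,2) by (simp add: qq_def)
  define h where "h = (\<lambda>n. min 0 (ln (Q n) - L * real n * \<theta> n / 2))"
  have ineq: "\<And>n. Q n \<ge> bb p powr (\<theta> n * real n / 2) * exp (h n)"
  proof -
    fix n
    have "bb p powr (\<theta> n * real n / 2) = exp (L * real n * \<theta> n / 2)"
      unfolding powr_def L_def using b1 by (simp add: algebra_simps)
    hence "bb p powr (\<theta> n * real n / 2) * exp (h n) = exp (L * real n * \<theta> n / 2 + h n)"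
      by (simp add: exp_add)
    also have "\<dots> \<le> exp (ln (Q n))" unfolding h_def by simp
    also have "\<dots> = Q n" using Qpos[of n] by simp
    finally show "Q n \<ge> bb p powr (\<theta> n * real n / 2) * exp (h n)" .
  qed
  have hg: "eventually (\<lambda>n. norm (h n) \<le> 1 * norm (g n)) at_top"
    using ev
  proof eventually_elim
    case (elim n)
    have "ln (Q n) \<ge> L * real n * \<theta> n / 2 - g n"
      unfolding Q_def g_def L_def
      using key[of p "\<theta> n" \<epsilon> n] assms(1,2,4) elim unfolding L_def by auto
    thus ?case unfolding h_def by auto
  qed
  have "h \<in> O(g)" using hg by (rule bigoI)
  hence "h \<in> o(\<lambda>n. real n)" using go by (rule landau_o.big_small_trans)
  thus ?thesis using ineq unfolding Q_def by blast
qed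


end
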